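(* Assume $\delta>d$, $\alpha=\gamma/(\delta-d)$, and that $f$ is not a polynomial product. Then for every $\epsilon>0$ there is $R>0$ such that $$\big|G_z^\alpha(w)-G_h(z^{-\alpha}w)\big|<\epsilon\quad\text{for all } (z,w) \text{ with } |z|>R,$$ i.e. $G_z^\alpha(w)=G_h(z^{-\alpha}w)+o(1)$ as $z\to\infty$, uniformly in $w$.
   Context: Let $p(z)=z^\delta+O(z^{\delta-1})$ be a monic polynomial of degree $\delta\ge 2$, and let $q(z,w)=b(z)w^d+(\text{terms of lower degree in } w)$ be a polynomial with $d=\deg_w q\ge 2$, where $b$ is a monic polynomial of degree $\gamma\ge 0$. Let $f(z,w)=(p(z),q(z,w))$; $f$ is a polynomial product if $q$ does not depend on $z$. Write $Q_z^n=q_{p^{n-1}(z)}\circ\cdots\circ q_{p(z)}\circ q_z$ with $q_z=q(z,\cdot)$. For $\delta>d$, $\alpha=\max\{n_j/(\delta-m_j)\}$ over monomials $z^{n_j}w^{m_j}$ appearing in $q$ with nonzero coefficient. $G_z^\alpha(w)=\lim_{n\to\infty}d^{-n}\log^+\big(|Q_z^n(w)|/|p^n(z)|^\alpha\big)$ (defined for $z$ with $p^n(z)\to\infty$). Give the monomial $z^nw^m$ weight $n+\alpha m$; let $h(z,w)$ be the sum of those terms of $q$ of weight exactly $\alpha\delta$ (the maximal weight; it contains $z^\gamma w^d$), and let $h(c)=h(1,c)$, a one-variable polynomial of degree $d$. $G_h(c)=\lim_{n\to\infty}d^{-n}\log^+|h^n(c)|$ is its Green function. The value $G_h(z^{-\alpha}w)$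 does not depend on the choice of branch of $z^{-\alpha}$. *)

theory Defs
  imports "HOL-Analysis.Analysis" "HOL-Computational_Algebra.Polynomial"
begin

text \<open>A polynomial q(z,w) in two complex variables is represented as a polynomial in w
  whose coefficients are polynomials in z: coeff (coeff q m) n is the coefficient of z^n w^m.\<close>

definition eval2 :: "complex poly poly \<Rightarrow> complex \<Rightarrow> complex \<Rightarrow> complex" where
  "eval2 q z w = (\<Sum>m\<le>degree q. poly (coeff q m) z * w ^ m)"

definition logplus :: "real \<Rightarrow> real" where
  "logplus x = max 0 (ln x)"

fun Qit :: "complex poly \<Rightarrow> complex poly poly \<Rightarrow> nat \<Rightarrow> complex \<Rightarrow> complex \<Rightarrow> complex" where
  "Qit p q 0 z w = w"
| "Qit p q (Suc n) z w = eval2 q ((poly p ^^ n) z) (Qit p q n z w)"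

definition alpha_exp :: "complex poly \<Rightarrow> complex poly poly \<Rightarrow> real" where
  "alpha_exp p q = Max {real n / (real (degree p) - real m) | n m. coeff (coeff q m) n \<noteq> 0}"

definition Galpha :: "complex poly \<Rightarrow> complex poly poly \<Rightarrow> complex \<Rightarrow> complex \<Rightarrow> real" where
  "Galpha p q z w = lim (\<lambda>n. logplus (norm (Qit p q n z w) / norm ((poly p ^^ n) z) powr alpha_exp p q)
                          / real (degree q) ^ n)"

text \<open>h(c) = h(1,c), where h collects the terms of q of weight n + alpha m = alpha delta.\<close>
definition hpoly :: "complex poly \<Rightarrow> complex poly poly \<Rightarrow> complex poly" where
  "hpoly p q = (\<Sum>m\<le>degree q. monom
      (\<Sum>n\<le>degree (coeff q m).
         if real n + alpha_exp p q * real m = alpha_exp p q * real (degree p)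
         then coeff (coeff q m) n else 0) m)"

definition green :: "complex poly \<Rightarrow> complex \<Rightarrow> real" where
  "green h c = lim (\<lambda>n. logplus (norm ((poly h ^^ n) c)) / real (degree h) ^ n)"

definition poly_product :: "complex poly poly \<Rightarrow> bool" where
  "poly_product q \<longleftrightarrow> (\<forall>m n. n > 0 \<longrightarrow> coeff (coeff q m) n = 0)"

end

theory Submission
  imports Defs
begin

lemma logplus_nonneg: "logplus x \<ge> 0" by (simp add: logplus_def)

lemma logplus_ge1: "x \<ge> 1 \<Longrightarrow> logplus x = ln x"
  by (simp add: logplus_def)

lemma logplus_alt: "x \<ge> 0 \<Longrightarrow> logplus x = ln (max 1 x)"
proof (cases "x \<ge> 1")
  case True thus ?thesis by (simp add: logplus_def)
next
  case False
  assume "x \<ge> 0"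
  have "ln x \<le> 0"
  proof (cases "x = 0")
    case False thus ?thesis using \<open>x\<ge>0\<close> \<open>\<not> x \<ge> 1\<close> by simp
  qed simp
  thus ?thesis using False by (simp add: logplus_def max_def)
qed

lemma logplus_le: "x \<ge> 0 \<Longrightarrow> logplus x \<le> x"
proof -
  assume x: "x \<ge> 0"
  show ?thesis
  proof (cases "x \<ge> 1")
    case True
    then show ?thesis using ln_le_minus_one[of x] by (simp add: logplus_def)
  next
    case False then show ?thesis using x by (simp add: logplus_alt max_def)
  qed
qed

lemma abs_ln_le: fixes t :: real assumes "\<bar>t - 1\<bar> \<le> 1/2" shows "\<bar>ln t\<bar> \<le> 2 * \<bar>t - 1\<bar>"
proof -
  have t: "t > 0" "t \<ge> 1/2" using assms by (auto simp: abs_if split: if_splits)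
  have u: "ln t \<le> t - 1" using ln_le_minus_one t by simp
  have "ln (1/t) \<le> 1/t - 1" using ln_le_minus_one t by simp
  hence l: "- ln t \<le> 1/t - 1" using t by (simp add: ln_div)
  have "1/t - 1 = (1 - t)/t" using t by (simp add: field_simps)
  also have "\<dots> \<le> 2 * \<bar>t - 1\<bar>"
  proof -
    have "(1 - t)/t \<le> \<bar>1-t\<bar>/t" using t by (simp add: divide_right_mono)
    also have "\<dots> \<le> \<bar>1-t\<bar>/(1/2)" using t by (intro divide_left_mono) auto
    finally show ?thesis by (simp add: abs_minus_commute mult.commute)
  qed
  finally have f: "1/t - 1 \<le> 2 * \<bar>t - 1\<bar>" .
  show ?thesis using u l f by (smt (verit))
qed

lemma geom_conv:
  fixes u :: "nat \<Rightarrow> real"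
  assumes inc: "\<And>n. \<bar>u (Suc n) - u n\<bar> \<le> C * r^n" and r: "0 \<le> r" "r < 1"
  shows "u \<longlonglongrightarrow> lim u" "\<And>n. \<bar>lim u - u n\<bar> \<le> C * r^n / (1 - r)"
proof -
  define D where "D k = u (Suc k) - u k" for k
  have C: "C \<ge> 0" using inc[of 0] by auto
  have sg: "summable (\<lambda>k. C * r^k)" using r by (intro summable_mult summable_geometric) auto
  have sD: "summable D"
    by (rule summable_comparison_test[OF _ sg]) (use inc in \<open>auto simp: D_def\<close>)
  have ueq: "u n = u 0 + (\<Sum>k<n. D k)" for n
    by (simp add: D_def sum_lessThan_telescope)
  have "(\<lambda>n. u 0 + (\<Sum>k<n. D k)) \<longlonglongrightarrow> u 0 + suminf D"
    by (intro tendsto_add tendsto_const summable_LIMSEQ sD)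
  moreover have "u = (\<lambda>n. u 0 + (\<Sum>k<n. D k))" by (rule ext, rule ueq)
  ultimately have lu: "u \<longlonglongrightarrow> u 0 + suminf D" by simp
  hence limu: "lim u = u 0 + suminf D" by (rule limI)
  show "u \<longlonglongrightarrow> lim u" using lu limu by simp
  fix n
  have "lim u - u n = suminf D - (\<Sum>k<n. D k)" using limu ueq[of n] by linarith
  also have "\<dots> = (\<Sum>k. D (k + n))" using suminf_split_initial_segment[OF sD, of n] by simp
  finally have e: "lim u - u n = (\<Sum>k. D (k + n))" .
  have sg2: "summable (\<lambda>k. C * r^n * r^k)" using r by (intro summable_mult summable_geometric) auto
  have "\<bar>\<Sum>k. D (k + n)\<bar> \<le> (\<Sum>k. C * r^n * r^k)"
  proof -
    have "summable (\<lambda>k. norm (D (k+n)))"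
    proof (rule summable_comparison_test[OF _ sg2], intro exI[of _ 0] allI impI)
      fix k show "norm (norm (D (k+n))) \<le> C*r^n*r^k" using inc[of "k+n"] by (simp add: D_def power_add mult_ac)
    qed
    hence "norm (\<Sum>k. D (k + n)) \<le> (\<Sum>k. norm (D (k+n)))" by (rule summable_norm)
    also have "\<dots> \<le> (\<Sum>k. C * r^n * r^k)"
    proof (rule suminf_le)
      fix k show "norm (D (k+n)) \<le> C*r^n*r^k" using inc[of "k+n"] by (simp add: D_def power_add mult_ac)
    qed (use sg2 \<open>summable (\<lambda>k. norm (D (k+n)))\<close> in auto)
    finally show ?thesis by simp
  qed
  also have "(\<Sum>k. C * r^n * r^k) = C * r^n / (1 - r)"
    using r by (simp add: suminf_mult suminf_geometric divide_simps)
  finally show "\<bar>lim u - u n\<bar> \<le> C * r^n / (1 - r)" using e by simp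
qed

lemma monic_poly_bound:
  fixes P :: "complex poly"
  assumes "lead_coeff P = 1" "norm x \<ge> 1"
  shows "norm (poly P x - x ^ degree P) \<le> (\<Sum>i<degree P. norm (coeff P i)) * norm x ^ (degree P - 1)"
proof -
  have "poly P x = (\<Sum>i<degree P. coeff P i * x^i) + x ^ degree P"
    by (simp add: poly_altdef lessThan_Suc_atMost[symmetric] assms(1))
  hence "norm (poly P x - x^degree P) = norm (\<Sum>i<degree P. coeff P i * x^i)" by simp
  also have "\<dots> \<le> (\<Sum>i<degree P. norm (coeff P i) * norm x ^ (degree P - 1))"
  proof (rule sum_norm_le)
    fix i assume "i \<in> {..<degree P}"
    hence "norm x ^ i \<le> norm x ^ (degree P - 1)" using assms(2) by (intro power_increasing) auto
    thus "norm (coeff P i * x ^ i) \<le> norm (coeff P i) * norm x ^ (degree P - 1)"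
      by (simp add: norm_mult norm_power mult_left_mono)
  qed
  also have "\<dots> = (\<Sum>i<degree P. norm (coeff P i)) * norm x ^ (degree P - 1)"
    by (simp add: sum_distrib_right)
  finally show ?thesis .
qed

locale greenloc =
  fixes h :: "complex poly"
  assumes monic: "lead_coeff h = 1" and deg: "degree h \<ge> 2"
begin

abbreviation "dd \<equiv> degree h"
definition "HH = (\<Sum>i<degree h. norm (coeff h i))"
definition "K0 = max 2 (2 * HH)"
definition "beta x = logplus (norm (poly h x)) - real dd * logplus (norm x)"
definition "Bn n x = logplus (norm ((poly h ^^ n) x)) / real dd ^ n"

lemma HH_nonneg: "HH \<ge> 0" unfolding HH_def by (intro sum_nonneg) auto
lemma K0: "K0 \<ge> 2" "K0 \<ge> 2 * HH" unfolding K0_def by auto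

lemma big:
  assumes x: "norm x \<ge> K0"
  shows "norm (poly h x) \<ge> norm x" "norm (poly h x) \<ge> 1" "\<bar>beta x\<bar> \<le> 2 * HH / norm x"
    "norm (poly h x) \<ge> norm x ^ dd / 2"
proof -
  have x2: "norm x \<ge> 2" and xH: "2 * HH \<le> norm x" using x K0 by auto
  have d1: "dd \<ge> 1" using deg by simp
  define e where "e = poly h x - x ^ dd"
  have e: "norm e \<le> HH * norm x ^ (dd - 1)"
    unfolding e_def HH_def by (rule monic_poly_bound[OF monic]) (use x2 in simp)
  have xd: "norm x ^ dd = norm x * norm x ^ (dd - 1)" using d1
    by (metis Suc_diff_1 less_le_trans power_Suc zero_less_one)
  have pos: "norm x ^ (dd - 1) \<ge> 1" using x2 by (intro one_le_power) auto
  have "HH * norm x ^ (dd - 1) \<le> (norm x / 2) * norm x ^ (dd - 1)"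
    using xH pos by (intro mult_right_mono) auto
  hence e2: "norm e \<le> norm x ^ dd / 2" using e xd by simp
  have "norm x ^ dd - norm e \<le> norm (poly h x)"
    using norm_triangle_ineq2[of "x ^ dd" "- e"] by (simp add: e_def norm_power norm_minus_commute)
  hence hx: "norm (poly h x) \<ge> norm x ^ dd / 2" using e2 by simp
  thus "norm (poly h x) \<ge> norm x ^ dd / 2" .
  have "norm x ^ (dd - 1) \<ge> norm x"
    using x2 d1 deg power_increasing[of 1 "dd - 1" "norm x"] by simp
  hence "norm x ^ dd \<ge> norm x * norm x" using xd x2 by (simp add: mult_left_mono)
  moreover have "norm x * norm x \<ge> 2 * norm x" using x2 by (simp add: mult_right_mono)
  ultimately have "norm x ^ dd / 2 \<ge> norm x" by simp
  thus h1: "norm (poly h x) \<ge> norm x" using hx by simp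
  thus "norm (poly h x) \<ge> 1" using x2 by simp
  have xpos: "norm x > 0" using x2 by linarith
  have xdpos: "norm x ^ dd > 0" using xpos by simp
  define t where "t = norm (poly h x) / norm x ^ dd"
  have "beta x = ln (norm (poly h x)) - real dd * ln (norm x)"
    unfolding beta_def using h1 x2 by (simp add: logplus_ge1)
  also have "\<dots> = ln t"
    unfolding t_def using h1 xpos by (subst ln_div) (auto simp: ln_realpow)
  finally have bt: "beta x = ln t" .
  have "\<bar>t - 1\<bar> = \<bar>norm (poly h x) - norm (x ^ dd)\<bar> / norm x ^ dd"
  proof -
    have "t - 1 = (norm(poly h x) - norm x^dd)/norm x^dd" unfolding t_def using xdpos xpos by (simp add: diff_divide_distrib)
    thus ?thesis using xdpos by (simp add: abs_divide norm_power)
  qed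
  also have "\<dots> \<le> norm e / norm x ^ dd"
    unfolding e_def by (intro divide_right_mono norm_triangle_ineq3) simp
  also have "\<dots> \<le> HH * norm x ^ (dd - 1) / norm x ^ dd"
    using e xdpos by (intro divide_right_mono) auto
  also have "\<dots> = HH / norm x" using xd xpos by (simp add: field_simps)
  finally have t1: "\<bar>t - 1\<bar> \<le> HH / norm x" .
  have "HH / norm x \<le> 1/2" using xH xpos by (simp add: field_simps)
  hence "\<bar>ln t\<bar> \<le> 2 * \<bar>t - 1\<bar>" using t1 by (intro abs_ln_le) linarith
  thus "\<bar>beta x\<bar> \<le> 2 * HH / norm x" using t1 bt by simp
qed

lemma beta_bounded: "\<exists>Bb. Bb \<ge> 0 \<and> (\<forall>x. \<bar>beta x\<bar> \<le> Bb)"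
proof -
  have "compact (poly h ` cball 0 K0)"
    by (intro compact_continuous_image continuous_on_poly continuous_on_id compact_cball)
  then obtain Bh where Bh: "\<And>x. x \<in> cball 0 K0 \<Longrightarrow> norm (poly h x) \<le> Bh"
    using compact_imp_bounded bounded_iff by (metis imageI)
  have Bh0: "Bh \<ge> 0" using Bh[of 0] K0 by (smt (verit) mem_cball_0 norm_ge_zero norm_zero)
  show ?thesis
  proof (intro exI conjI allI)
    fix x
    show "\<bar>beta x\<bar> \<le> Bh + dd * K0 + 1"
    proof (cases "norm x \<ge> K0")
      case True
      have "2 * HH / norm x \<le> 1" using True K0 by (subst divide_le_eq_1) auto
      moreover have "real dd * K0 \<ge> 0" using K0 by simp
      ultimately show ?thesis using big(3)[OF True] Bh0 by linarith
    next
      case False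
      hence xc: "x \<in> cball 0 K0" by simp
      have a: "0 \<le> logplus (norm (poly h x))" "logplus (norm (poly h x)) \<le> Bh"
        using logplus_le[of "norm (poly h x)"] Bh[OF xc] logplus_nonneg by auto
      have b: "0 \<le> logplus (norm x)" "logplus (norm x) \<le> K0"
        using logplus_le[of "norm x"] False logplus_nonneg by auto
      have "real dd * logplus (norm x) \<le> real dd * K0" using b by (simp add: mult_left_mono)
      moreover have "real dd * logplus (norm x) \<ge> 0" using b by simp
      ultimately show ?thesis using a unfolding beta_def by linarith
    qed
  qed (use Bh0 K0 in simp)
qed

lemma dd_pos: "real dd \<ge> 2" using deg by simp

lemma Bn_step: "Bn (Suc n) x - Bn n x = beta ((poly h ^^ n) x) / real dd ^ Suc n"
  using dd_pos unfolding Bn_def beta_def by (simp add: field_simps)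

lemma Bn_step_bound:
  assumes "\<bar>beta ((poly h ^^ n) x)\<bar> \<le> B"
  shows "\<bar>Bn (Suc n) x - Bn n x\<bar> \<le> (B / dd) * (1 / dd) ^ n"
proof -
  have "\<bar>Bn (Suc n) x - Bn n x\<bar> = \<bar>beta ((poly h ^^ n) x)\<bar> / real dd ^ Suc n"
    using Bn_step by simp
  also have "\<dots> \<le> B / real dd ^ Suc n" using assms dd_pos by (intro divide_right_mono) auto
  also have "\<dots> = (B / dd) * (1 / dd) ^ n" by (simp add: power_divide field_simps)
  finally show ?thesis .
qed

lemma geom_fact: "(B / dd) * (1/dd)^n / (1 - 1/dd) \<le> B * (1/dd)^n" if "B \<ge> 0"
proof -
  have "(B / dd) / (1 - 1/dd) = B / (dd - 1)" using dd_pos by (simp add: field_simps)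
  also have "\<dots> \<le> B" using that dd_pos apply (simp add: field_simps) by (rule mult_left_mono) auto
  finally have "(B / dd) / (1 - 1/dd) \<le> B" .
  hence "(B / dd) / (1 - 1/dd) * (1/dd)^n \<le> B * (1/dd)^n" by (rule mult_right_mono) simp
  thus ?thesis by (simp only: times_divide_eq_left)
qed

lemma green_eq: "green h x = lim (\<lambda>n. Bn n x)"
  unfolding green_def Bn_def ..


definition "Bb = (SOME B. B \<ge> 0 \<and> (\<forall>x. \<bar>beta x\<bar> \<le> B))"
lemma Bb: "Bb \<ge> 0" "\<bar>beta x\<bar> \<le> Bb"
  using someI_ex[OF beta_bounded] unfolding Bb_def[symmetric] by auto

lemma r_facts: "0 \<le> 1 / real dd" "1 / real dd < 1" using dd_pos by auto

lemma G_conv: "(\<lambda>n. Bn n x) \<longlonglongrightarrow> green h x"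
proof -
  have inc: "\<And>n. \<bar>Bn (Suc n) x - Bn n x\<bar> \<le> (Bb/dd)*(1/dd)^n" by (rule Bn_step_bound) (rule Bb)
  show ?thesis using geom_conv(1)[OF inc r_facts] green_eq by simp
qed

lemma G_tail: "\<bar>green h x - Bn n x\<bar> \<le> Bb * (1/dd)^n"
proof -
  have inc: "\<And>n. \<bar>Bn (Suc n) x - Bn n x\<bar> \<le> (Bb/dd)*(1/dd)^n" by (rule Bn_step_bound) (rule Bb)
  show ?thesis using geom_conv(2)[OF inc r_facts, of n] geom_fact[OF Bb(1), of n] green_eq by simp
qed

lemma Bn0: "Bn 0 x = logplus (norm x)" by (simp add: Bn_def)

lemma G_log: "\<bar>green h x - logplus (norm x)\<bar> \<le> Bb"
  using G_tail[of x 0] by (simp add: Bn0)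

lemma orbit_big: "norm x \<ge> K0 \<Longrightarrow> norm ((poly h ^^ n) x) \<ge> norm x"
proof (induction n)
  case (Suc n)
  hence "norm ((poly h ^^ n) x) \<ge> K0" by simp
  from big(1)[OF this] Suc show ?case by simp
qed simp

lemma G_big:
  assumes x: "norm x \<ge> K0"
  shows "\<bar>green h x - logplus (norm x)\<bar> \<le> 2 * HH / norm x"
proof -
  have xpos: "norm x > 0" using x K0 by linarith
  have b: "\<bar>beta ((poly h ^^ n) x)\<bar> \<le> 2 * HH / norm x" for n
  proof -
    have o: "norm ((poly h ^^ n) x) \<ge> norm x" by (rule orbit_big[OF x])
    hence "norm ((poly h ^^ n) x) \<ge> K0" using x by simp
    hence b1: "\<bar>beta ((poly h ^^ n) x)\<bar> \<le> 2 * HH / norm ((poly h ^^ n) x)" by (rule big(3))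
    have "norm ((poly h ^^ n) x) > 0" using o xpos by linarith
    hence "2 * HH / norm ((poly h ^^ n) x) \<le> 2 * HH / norm x" using o xpos HH_nonneg by (intro divide_left_mono) auto
    thus ?thesis using b1 by linarith
  qed
  have inc: "\<And>n. \<bar>Bn (Suc n) x - Bn n x\<bar> \<le> ((2 * HH / norm x)/dd)*(1/dd)^n"
    by (rule Bn_step_bound) (rule b)
  have B0: "2 * HH / norm x \<ge> 0" using HH_nonneg xpos by simp
  show ?thesis using geom_conv(2)[OF inc r_facts, of 0] geom_fact[OF B0, of 0] green_eq
    by (simp add: Bn0)
qed

lemma G_func: "green h (poly h x) = dd * green h x"
proof -
  have e: "Bn n (poly h x) = dd * Bn (Suc n) x" for n
    using dd_pos unfolding Bn_def by (simp add: funpow_swap1 field_simps)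
  have "(\<lambda>n. Bn (Suc n) x) \<longlonglongrightarrow> green h x" using G_conv LIMSEQ_Suc by blast
  hence "(\<lambda>n. dd * Bn (Suc n) x) \<longlonglongrightarrow> dd * green h x" by (rule tendsto_mult_left)
  hence "(\<lambda>n. Bn n (poly h x)) \<longlonglongrightarrow> dd * green h x" using e by simp
  thus ?thesis using G_conv LIMSEQ_unique by blast
qed

lemma funpow_cont: "continuous_on UNIV (poly h ^^ n)"
proof (induction n)
  case (Suc n)
  have "continuous_on UNIV (\<lambda>x. poly h ((poly h ^^ n) x))"
    by (rule continuous_on_poly) (use Suc in \<open>simp add: o_def\<close>)
  thus ?case by (simp add: o_def)
qed (simp add: continuous_on_id id_def)

lemma Bn_cont: "continuous_on UNIV (Bn n)"
proof -
  have e: "Bn n = (\<lambda>x. ln (max 1 (norm ((poly h ^^ n) x))) / real dd ^ n)"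
    by (rule ext) (simp add: Bn_def logplus_alt)
  have "continuous_on UNIV (\<lambda>x. ln (max 1 (norm ((poly h ^^ n) x))) / real dd ^ n)"
    using funpow_cont[of n] dd_pos by (intro continuous_intros) (auto simp: o_def)
  thus ?thesis using e by simp
qed

lemma G_cont: "continuous_on UNIV (green h)"
proof (rule uniform_limit_theorem)
  show "\<forall>\<^sub>F n in sequentially. continuous_on UNIV (Bn n)" by (simp add: Bn_cont)
  show "uniform_limit UNIV Bn (green h) sequentially"
    unfolding uniform_limit_iff
  proof (intro allI impI)
    fix e :: real assume e: "e > 0"
    have "(\<lambda>n. Bb * (1 / real dd) ^ n) \<longlonglongrightarrow> Bb * 0"
      using r_facts by (intro tendsto_mult_left LIMSEQ_power_zero) auto
    hence "\<forall>\<^sub>F n in sequentially. Bb * (1 / real dd) ^ n < e" using e by (auto dest: order_tendstoD(2))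
    thus "\<forall>\<^sub>F n in sequentially. \<forall>x\<in>UNIV. dist (Bn n x) (green h x) < e"
      by eventually_elim (use G_tail in \<open>auto simp: dist_real_def abs_minus_commute intro: le_less_trans\<close>)
  qed
qed simp


lemma G_ucont:
  assumes eta: "\<eta> > 0"
  shows "\<exists>\<theta>>0. \<forall>X v. norm (v - X) \<le> \<theta> * (1 + norm X) \<longrightarrow> \<bar>green h v - green h X\<bar> \<le> \<eta>"
proof -
  define K1 where "K1 = max (2 * K0) (12 * HH / \<eta>)"
  have K1: "K1 \<ge> 2 * K0" "K1 \<ge> 12 * HH / \<eta>" unfolding K1_def by auto
  have "uniformly_continuous_on (cball 0 (K1 + 1)) (green h)"
    by (intro compact_uniformly_continuous continuous_on_subset[OF G_cont]) auto
  then obtain du where du: "du > 0"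
    "\<And>x y. x \<in> cball 0 (K1+1) \<Longrightarrow> y \<in> cball 0 (K1+1) \<Longrightarrow> dist y x < du \<Longrightarrow> dist (green h y) (green h x) < \<eta>"
    unfolding uniformly_continuous_on_def using eta by metis
  define \<theta> where "\<theta> = min (1/4) (min (\<eta>/8) (min du 1 / (2 * (1 + K1))))"
  have K1pos: "K1 > 0" using K1 K0 by linarith
  have c: "2 * (1 + K1) > 0" using K1pos by simp
  have m: "min du 1 > 0" using du by simp
  have "min du 1 / (2 * (1 + K1)) > 0" using c m by simp
  hence th1: "\<theta> > 0" unfolding \<theta>_def using eta by (simp add: min_def)
  have th2: "\<theta> \<le> 1/4" unfolding \<theta>_def by (rule min.cobounded1)
  have th3: "\<theta> \<le> \<eta>/8" unfolding \<theta>_def by (rule min.coboundedI2[OF min.cobounded1])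
  note th123 = th1 th2 th3
  have "\<theta> \<le> min du 1 / (2 * (1 + K1))" unfolding \<theta>_def by simp
  hence "\<theta> * (2 * (1 + K1)) \<le> min du 1" using pos_le_divide_eq[OF c] by blast
  note th = th123 this
  show ?thesis
  proof (intro exI[of _ \<theta>] conjI allI impI th(1))
    fix X v :: complex assume vX: "norm (v - X) \<le> \<theta> * (1 + norm X)"
    show "\<bar>green h v - green h X\<bar> \<le> \<eta>"
    proof (cases "norm X \<le> K1")
      case True
      have "\<theta> * (1 + norm X) \<le> \<theta> * (1 + K1)" using True th by (intro mult_left_mono) auto
      hence s: "norm (v - X) \<le> min du 1 / 2" using vX th(4) by (simp add: field_simps)
      hence "norm v \<le> K1 + 1" using True norm_triangle_ineq2[of v X] by linarith
      moreover have "dist v X < du" using s du(1) by (simp add: dist_norm)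
      ultimately have "dist (green h v) (green h X) < \<eta>" using True by (intro du(2)) auto
      thus ?thesis by (simp add: dist_real_def)
    next
      case False
      have X1: "norm X \<ge> 1" "norm X \<ge> K0" using False K1 K0 by linarith+
      have Xpos: "norm X > 0" using X1 by linarith
      have "\<theta> * (1 + norm X) \<le> (1/4) * (1 + norm X)" using th by (intro mult_right_mono) auto
      moreover have "(1/4) * (1 + norm X) \<le> norm X / 2" using X1 by simp
      ultimately have vX2: "norm (v - X) \<le> norm X / 2" using vX by linarith
      have nv: "norm v \<ge> norm X / 2" using vX2 norm_triangle_ineq2[of X v] by (simp add: norm_minus_commute)
      have v1: "norm v \<ge> K0" "norm v \<ge> 1" using nv False K1 K0 by linarith+
      have vpos: "norm v > 0" using v1 by linarith
      have gv: "\<bar>green h v - ln (norm v)\<bar> \<le> 2 * HH / norm v" using G_big[OF v1(1)] v1 by (simp add: logplus_ge1)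
      have gX: "\<bar>green h X - ln (norm X)\<bar> \<le> 2 * HH / norm X" using G_big[OF X1(2)] X1 by (simp add: logplus_ge1)
      have "2 * HH / norm v \<le> 2 * HH / (norm X / 2)" using nv HH_nonneg Xpos vpos by (intro divide_left_mono) auto
      hence gv2: "2 * HH / norm v \<le> 4 * HH / norm X" by simp
      have hh: "6 * HH / norm X \<le> \<eta> / 2"
      proof -
        have "12 * HH / \<eta> \<le> norm X" using K1 False by linarith
        hence "12 * HH \<le> norm X * \<eta>" using eta by (simp add: field_simps)
        thus ?thesis using Xpos by (simp add: field_simps)
      qed
      define t where "t = norm v / norm X"
      have "\<bar>t - 1\<bar> = \<bar>norm v - norm X\<bar> / norm X"
      proof -
        have "t - 1 = (norm v - norm X) / norm X" unfolding t_def using Xpos by (simp add: diff_divide_distrib)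
        thus ?thesis using Xpos by (simp add: abs_divide)
      qed
      also have "\<dots> \<le> norm (v - X) / norm X" using Xpos by (intro divide_right_mono norm_triangle_ineq3) auto
      also have "\<dots> \<le> \<theta> * (1 + norm X) / norm X" using Xpos vX by (intro divide_right_mono) auto
      also have "\<dots> \<le> \<theta> * (2 * norm X) / norm X" using Xpos X1 th by (intro divide_right_mono mult_left_mono) auto
      also have "\<dots> = 2 * \<theta>" using Xpos by simp
      finally have t1: "\<bar>t - 1\<bar> \<le> 2 * \<theta>" .
      hence "\<bar>ln t\<bar> \<le> 2 * \<bar>t - 1\<bar>" using th by (intro abs_ln_le) linarith
      hence lt: "\<bar>ln (norm v) - ln (norm X)\<bar> \<le> \<eta> / 2" using t1 th vpos Xpos unfolding t_def by (simp add: ln_div)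
      have "\<bar>green h v - green h X\<bar> \<le> 2 * HH / norm v + 2 * HH / norm X + \<eta> / 2"
        using gv gX lt by linarith
      also have "\<dots> \<le> 6 * HH / norm X + \<eta> / 2"
      proof -
        have "4*HH/norm X + 2*HH/norm X = 6*HH/norm X" by (simp add: add_divide_distrib[symmetric])
        thus ?thesis using gv2 by linarith
      qed
      finally show ?thesis using hh by linarith
    qed
  qed
qed


lemma growth: "\<exists>C>0. \<forall>c. (1 + norm c) ^ dd \<le> C * (1 + norm (poly h c))"
proof (intro exI[of _ "2 ^ (dd+1) + (1 + K0) ^ dd"] conjI allI)
  show "2 ^ (dd+1) + (1 + K0) ^ dd > (0::real)" using K0 by (intro add_pos_nonneg) auto
  fix c
  have hp: "0 \<le> norm (poly h c)" by simp
  show "(1 + norm c) ^ dd \<le> (2 ^ (dd+1) + (1 + K0) ^ dd) * (1 + norm (poly h c))"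
  proof (cases "norm c \<ge> K0")
    case True
    have c1: "1 \<le> norm c" using True K0 by linarith
    have "(1 + norm c) ^ dd \<le> (2 * norm c) ^ dd" using c1 by (intro power_mono) auto
    also have "\<dots> = 2 ^ dd * norm c ^ dd" by (simp add: power_mult_distrib)
    also have "\<dots> \<le> 2 ^ dd * (2 * norm (poly h c))" using big(4)[OF True] by (intro mult_left_mono) auto
    also have "\<dots> = 2 ^ (dd+1) * norm (poly h c)" by simp
    also have "\<dots> \<le> (2 ^ (dd+1) + (1 + K0) ^ dd) * (1 + norm (poly h c))"
      using K0 hp by (intro mult_mono) auto
    finally show ?thesis .
  next
    case False
    have "(1 + norm c) ^ dd \<le> (1 + K0) ^ dd" using False by (intro power_mono) auto
    also have "\<dots> \<le> (2 ^ (dd+1) + (1 + K0) ^ dd) * (1 + norm (poly h c))"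
    proof -
      have "(1 + K0) ^ dd \<le> (2 ^ (dd+1) + (1 + K0) ^ dd) * 1" by simp
      also have "\<dots> \<le> (2 ^ (dd+1) + (1 + K0) ^ dd) * (1 + norm (poly h c))"
        using K0 by (intro mult_left_mono) auto
      finally show ?thesis .
    qed
    finally show ?thesis .
  qed
qed

end


locale mainloc =
  fixes p :: "complex poly" and q :: "complex poly poly"
  assumes p_monic: "lead_coeff p = 1" and p_deg: "degree p \<ge> 2" and q_deg: "degree q \<ge> 2"
    and b_monic: "lead_coeff (lead_coeff q) = 1" and delta_gt: "degree p > degree q"
    and alpha_eq: "alpha_exp p q = real (degree (lead_coeff q)) / (real (degree p) - real (degree q))"
begin

abbreviation "aa \<equiv> alpha_exp p q"
abbreviation "dp \<equiv> degree p"
abbreviation "dq \<equiv> degree q"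
abbreviation "gm \<equiv> degree (lead_coeff q)"
definition "weq m n \<longleftrightarrow> real n + aa * real m = aa * real dp"
definition "hc m = (\<Sum>n\<le>degree (coeff q m). if weq m n then coeff (coeff q m) n else 0)"

lemma coeff_nz_m: "coeff (coeff q m) n \<noteq> 0 \<Longrightarrow> m \<le> dq"
  by (metis coeff_0 le_degree)
lemma coeff_nz_n: "coeff (coeff q m) n \<noteq> 0 \<Longrightarrow> n \<le> degree (coeff q m)"
  by (rule le_degree)

lemma Sfin: "finite {real n / (real dp - real m) | n m. coeff (coeff q m) n \<noteq> 0}"
proof (rule finite_subset)
  show "{real n / (real dp - real m) | n m. coeff (coeff q m) n \<noteq> 0} \<subseteq>
        (\<lambda>(m,n). real n / (real dp - real m)) ` (SIGMA m:{..dq}. {..degree (coeff q m)})"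
    using coeff_nz_m coeff_nz_n by fastforce
qed auto

lemma dpm_pos: "m \<le> dq \<Longrightarrow> real dp - real m > 0" using delta_gt by simp

lemma weight_le: assumes "coeff (coeff q m) n \<noteq> 0" shows "real n + aa * real m \<le> aa * real dp"
proof -
  have "real n / (real dp - real m) \<le> aa" unfolding alpha_exp_def
    by (rule Max_ge[OF Sfin]) (use assms in blast)
  moreover have pos: "real dp - real m > 0" using dpm_pos coeff_nz_m assms by blast
  ultimately have "real n \<le> aa * (real dp - real m)" by (simp add: pos_divide_le_eq)
  thus ?thesis by (simp add: algebra_simps)
qed

lemma aa_nonneg: "aa \<ge> 0" using alpha_eq delta_gt by simp

lemma aa_gm: "aa * (real dp - real dq) = real gm" using alpha_eq delta_gt by simp

lemma hpoly_eq: "hpoly p q = (\<Sum>m\<le>dq. monom (hc m) m)"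
  by (simp add: hpoly_def hc_def weq_def)

lemma coeff_h: "coeff (hpoly p q) m = (if m \<le> dq then hc m else 0)"
  by (simp add: hpoly_eq coeff_sum coeff_monom)

lemma poly_h: "poly (hpoly p q) c = (\<Sum>m\<le>dq. hc m * c ^ m)"
  by (simp add: hpoly_eq poly_sum poly_monom)

lemma hc_d: "hc dq = 1"
proof -
  have w: "weq dq n \<longleftrightarrow> n = gm" for n
  proof -
    have "weq dq n \<longleftrightarrow> real n = aa * (real dp - real dq)" unfolding weq_def by (simp add: algebra_simps)
    thus ?thesis using aa_gm by simp
  qed
  have "hc dq = (\<Sum>n\<le>gm. if n = gm then coeff (lead_coeff q) n else 0)"
    unfolding hc_def using w by simp
  also have "\<dots> = 1" using b_monic by simp
  finally show ?thesis .
qed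

lemma h_deg: "degree (hpoly p q) = dq"
proof (rule antisym)
  show "degree (hpoly p q) \<le> dq" by (rule degree_le) (simp add: coeff_h)
  show "dq \<le> degree (hpoly p q)" by (rule le_degree) (simp add: coeff_h hc_d)
qed

lemma h_monic: "lead_coeff (hpoly p q) = 1"
proof -
  have "coeff (hpoly p q) dq = hc dq" by (subst coeff_h) simp
  thus ?thesis using hc_d h_deg by simp
qed

sublocale G: greenloc "hpoly p q" by unfold_locales (rule h_monic, simp add: h_deg q_deg)


definition "rot k = exp (complex_of_real (aa * (2 * pi * real_of_int k)) * \<i>)"

lemma exp_int: "exp (complex_of_real (2 * pi * real_of_int j) * \<i>) = 1"
proof -
  have "exp (complex_of_real (2 * pi * real_of_int j) * \<i>) = exp 0"
    unfolding exp_eq by (intro exI[of _ j]) (simp add: mult_ac)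
  thus ?thesis by simp
qed

lemma hc_nz: "hc m \<noteq> 0 \<Longrightarrow> \<exists>n. weq m n"
proof (rule ccontr)
  assume "hc m \<noteq> 0" "\<nexists>n. weq m n"
  hence "hc m = 0" unfolding hc_def by (intro sum.neutral) auto
  thus False using \<open>hc m \<noteq> 0\<close> by simp
qed

lemma rot_pow: "rot k ^ m = rot (k * int m)"
proof -
  have "rot k ^ m = exp (of_nat m * (complex_of_real (aa * (2 * pi * real_of_int k)) * \<i>))"
    unfolding rot_def by (rule exp_of_nat_mult[symmetric])
  also have "\<dots> = rot (k * int m)" unfolding rot_def by (simp add: mult_ac)
  finally show ?thesis .
qed

lemma rot_weq: assumes "weq m n" shows "rot k ^ m = rot k ^ dp"
proof -
  have w: "aa * real dp = real n + aa * real m" using assms unfolding weq_def by simp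
  have "rot k ^ dp = rot (k * int dp)" by (rule rot_pow)
  also have "\<dots> = exp (complex_of_real (aa * real dp * (2 * pi * real_of_int k)) * \<i>)"
    unfolding rot_def by (simp add: mult_ac)
  also have "\<dots> = exp (complex_of_real (aa * real m * (2 * pi * real_of_int k)) * \<i>
                    + complex_of_real (2 * pi * real_of_int (int n * k)) * \<i>)"
    unfolding w by (simp add: algebra_simps)
  also have "\<dots> = rot (k * int m)"
    unfolding exp_add exp_int rot_def by (simp add: mult_ac)
  also have "\<dots> = rot k ^ m" by (rule rot_pow[symmetric])
  finally show ?thesis by simp
qed

lemma h_rot: "poly (hpoly p q) (rot k * x) = rot k ^ dp * poly (hpoly p q) x"
proof -
  have "poly (hpoly p q) (rot k * x) = (\<Sum>m\<le>dq. rot k ^ dp * (hc m * x ^ m))"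
    unfolding poly_h
  proof (rule sum.cong[OF refl])
    fix m
    show "hc m * (rot k * x) ^ m = rot k ^ dp * (hc m * x ^ m)"
    proof (cases "hc m = 0")
      case False
      then obtain n where "weq m n" using hc_nz by blast
      thus ?thesis using rot_weq[of m n k] by (simp add: power_mult_distrib)
    qed simp
  qed
  thus ?thesis unfolding poly_h by (simp add: sum_distrib_left)
qed

lemma h_iter_rot: "(poly (hpoly p q) ^^ n) (rot k * x) = rot (k * int dp ^ n) * (poly (hpoly p q) ^^ n) x"
proof (induction n)
  case (Suc n)
  have "(poly (hpoly p q) ^^ Suc n) (rot k * x) = poly (hpoly p q) ((poly (hpoly p q) ^^ n) (rot k * x))" by simp
  also have "\<dots> = poly (hpoly p q) (rot (k * int dp ^ n) * (poly (hpoly p q) ^^ n) x)" by (simp only: Suc.IH)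
  also have "\<dots> = rot (k * int dp ^ n) ^ dp * poly (hpoly p q) ((poly (hpoly p q) ^^ n) x)" by (rule h_rot)
  also have "\<dots> = rot (k * int dp ^ Suc n) * (poly (hpoly p q) ^^ Suc n) x" by (simp add: rot_pow mult_ac)
  finally show ?case .
qed simp

lemma norm_rot: "norm (rot k) = 1"
  unfolding rot_def norm_exp_eq_Re by simp

lemma green_rot: "green (hpoly p q) (rot k * x) = green (hpoly p q) x"
  unfolding green_def h_iter_rot norm_mult norm_rot by simp

definition "rr y c = (\<Sum>m\<le>dq. \<Sum>n\<le>degree (coeff q m).
   (if weq m n then 0 else coeff (coeff q m) n * exp (complex_of_real (real n + aa * real m - aa * real dp) * Ln y)) * c ^ m)"

lemma term_eq:
  assumes y: "y \<noteq> 0"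
  shows "x * y ^ n * (c * exp (complex_of_real aa * Ln y)) ^ m =
     exp (complex_of_real (aa * real dp) * Ln y) * ((if weq m n then x else 0) * c ^ m +
       (if weq m n then 0 else x * exp (complex_of_real (real n + aa * real m - aa * real dp) * Ln y)) * c ^ m)"
proof -
  have "y ^ n * exp (complex_of_real aa * Ln y) ^ m = exp (of_nat n * Ln y) * exp (of_nat m * (complex_of_real aa * Ln y))"
    using y by (simp add: exp_of_nat_mult)
  also have "\<dots> = exp (complex_of_real (real n + aa * real m) * Ln y)"
    unfolding exp_add[symmetric] by (simp add: algebra_simps)
  finally have e1: "y ^ n * exp (complex_of_real aa * Ln y) ^ m = exp (complex_of_real (real n + aa * real m) * Ln y)" .
  have lhs: "x * y ^ n * (c * exp (complex_of_real aa * Ln y)) ^ m = x * c ^ m * exp (complex_of_real (real n + aa * real m) * Ln y)"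
    using e1 by (simp add: power_mult_distrib mult_ac)
  show ?thesis
  proof (cases "weq m n")
    case True
    hence "real n + aa * real m = aa * real dp" unfolding weq_def .
    thus ?thesis using True lhs by (simp add: mult_ac)
  next
    case False
    have "exp (complex_of_real (aa * real dp) * Ln y) * exp (complex_of_real (real n + aa * real m - aa * real dp) * Ln y)
       = exp (complex_of_real (real n + aa * real m) * Ln y)"
      unfolding exp_add[symmetric] by (simp add: algebra_simps)
    thus ?thesis using False lhs by (simp add: algebra_simps)
  qed
qed

lemma expand:
  assumes y: "y \<noteq> 0"
  shows "eval2 q y (c * exp (complex_of_real aa * Ln y)) = exp (complex_of_real (aa * real dp) * Ln y) * (poly (hpoly p q) c + rr y c)"
proof -
  have "eval2 q y (c * exp (complex_of_real aa * Ln y)) =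
     (\<Sum>m\<le>dq. \<Sum>n\<le>degree (coeff q m). coeff (coeff q m) n * y ^ n * (c * exp (complex_of_real aa * Ln y)) ^ m)"
    unfolding eval2_def poly_altdef by (simp add: sum_distrib_right)
  also have "\<dots> = (\<Sum>m\<le>dq. \<Sum>n\<le>degree (coeff q m). exp (complex_of_real (aa * real dp) * Ln y) *
       ((if weq m n then coeff (coeff q m) n else 0) * c ^ m +
       (if weq m n then 0 else coeff (coeff q m) n * exp (complex_of_real (real n + aa * real m - aa * real dp) * Ln y)) * c ^ m))"
    by (intro sum.cong refl term_eq y)
  also have "\<dots> = exp (complex_of_real (aa * real dp) * Ln y) * (poly (hpoly p q) c + rr y c)"
    unfolding poly_h rr_def hc_def
    by (simp add: sum_distrib_left sum_distrib_right sum.distrib distrib_left)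
  finally show ?thesis .
qed

definition "rho t = (\<Sum>m\<le>dq. \<Sum>n\<le>degree (coeff q m).
   if weq m n \<or> coeff (coeff q m) n = 0 then 0 else norm (coeff (coeff q m) n) * t powr (real n + aa * real m - aa * real dp))"

lemma norm_exp_Ln: "y \<noteq> 0 \<Longrightarrow> norm (exp (complex_of_real s * Ln y)) = norm y powr s"
  by (simp add: norm_exp_eq_Re Re_Ln powr_def)

lemma rr_bound:
  assumes y: "y \<noteq> 0"
  shows "norm (rr y c) \<le> rho (norm y) * (1 + norm c) ^ dq"
proof -
  have "norm (rr y c) \<le> (\<Sum>m\<le>dq. \<Sum>n\<le>degree (coeff q m).
     (if weq m n \<or> coeff (coeff q m) n = 0 then 0 else norm (coeff (coeff q m) n) * norm y powr (real n + aa * real m - aa * real dp)) * (1 + norm c) ^ dq)"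
    unfolding rr_def
  proof (intro order.trans[OF norm_sum] sum_mono order.trans[OF norm_sum])
    fix m n assume m: "m \<in> {..dq}"
    have cm: "norm c ^ m \<le> (1 + norm c) ^ dq"
    proof -
      have "norm c ^ m \<le> (1 + norm c) ^ m" by (intro power_mono) auto
      also have "\<dots> \<le> (1 + norm c) ^ dq" using m by (intro power_increasing) auto
      finally show ?thesis .
    qed
    show "norm ((if weq m n then 0 else coeff (coeff q m) n * exp (complex_of_real (real n + aa * real m - aa * real dp) * Ln y)) * c ^ m)
      \<le> (if weq m n \<or> coeff (coeff q m) n = 0 then 0 else norm (coeff (coeff q m) n) * norm y powr (real n + aa * real m - aa * real dp)) * (1 + norm c) ^ dq"
      using cm y by (auto simp: norm_mult norm_exp_eq_Re Re_Ln powr_def norm_power intro!: mult_left_mono)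
  qed
  also have "\<dots> = rho (norm y) * (1 + norm c) ^ dq"
    unfolding rho_def by (simp add: sum_distrib_right)
  finally show ?thesis .
qed

lemma rho_tendsto: "(rho \<longlongrightarrow> 0) at_top"
  unfolding rho_def
proof (intro tendsto_null_sum)
  fix m n
  show "((\<lambda>t. if weq m n \<or> coeff (coeff q m) n = 0 then 0 else norm (coeff (coeff q m) n) * t powr (real n + aa * real m - aa * real dp)) \<longlongrightarrow> 0) at_top"
  proof (cases "weq m n \<or> coeff (coeff q m) n = 0")
    case False
    hence "real n + aa * real m < aa * real dp" using weight_le[of m n] unfolding weq_def by auto
    hence "((\<lambda>t. t powr (real n + aa * real m - aa * real dp)) \<longlongrightarrow> 0) at_top"
      by (intro tendsto_neg_powr filterlim_ident) auto
    hence "((\<lambda>t. norm (coeff (coeff q m) n) * t powr (real n + aa * real m - aa * real dp)) \<longlongrightarrow> 0) at_top"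
      by (rule tendsto_mult_right_zero)
    thus ?thesis using False by simp
  qed simp
qed


definition "F y c = (poly p y) powr (- complex_of_real aa) * eval2 q y (c * exp (complex_of_real aa * Ln y))"

definition "PP = (\<Sum>i<dp. norm (coeff p i))"

lemma u_bound:
  assumes y: "norm y \<ge> 1"
  shows "norm (poly p y / y ^ dp - 1) \<le> PP / norm y"
proof -
  have ypos: "norm y > 0" using y by linarith
  have y0: "y \<noteq> 0" using ypos by auto
  have d1: "dp \<ge> 1" using p_deg by simp
  have xd: "norm y ^ dp = norm y * norm y ^ (dp - 1)" using d1
    by (metis Suc_diff_1 less_le_trans power_Suc zero_less_one)
  have "poly p y / y ^ dp - 1 = (poly p y - y ^ dp) / y ^ dp" using y0 by (simp add: diff_divide_distrib)
  hence "norm (poly p y / y ^ dp - 1) = norm (poly p y - y ^ dp) / norm y ^ dp" by (simp add: norm_divide norm_power)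
  also have "\<dots> \<le> PP * norm y ^ (dp - 1) / norm y ^ dp"
    unfolding PP_def by (intro divide_right_mono monic_poly_bound[OF p_monic y]) simp
  also have "\<dots> = PP / norm y" using xd ypos by (simp add: field_simps)
  finally show ?thesis .
qed

lemma u_tendsto: "((\<lambda>y. poly p y / y ^ dp) \<longlongrightarrow> 1) at_infinity"
proof (rule LIM_zero_cancel, rule Lim_null_comparison)
  show "\<forall>\<^sub>F y in at_infinity. norm (poly p y / y ^ dp - 1) \<le> PP / norm y"
    unfolding eventually_at_infinity by (intro exI[of _ 1] allI impI u_bound)
  show "((\<lambda>y. PP / norm y) \<longlongrightarrow> 0) at_infinity"
    by (rule tendsto_divide_0[OF tendsto_const filterlim_at_top_imp_at_infinity[OF filterlim_norm_at_top]])
qed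

lemma nu_tendsto: "((\<lambda>y. exp (- (complex_of_real aa * Ln (poly p y / y ^ dp)))) \<longlongrightarrow> 1) at_infinity"
proof -
  have "((\<lambda>y. Ln (poly p y / y ^ dp)) \<longlongrightarrow> Ln 1) at_infinity"
    by (rule isCont_tendsto_compose[OF continuous_at_Ln u_tendsto]) simp
  hence "((\<lambda>y. exp (- (complex_of_real aa * Ln (poly p y / y ^ dp)))) \<longlongrightarrow> exp (- (complex_of_real aa * Ln 1))) at_infinity"
    by (rule tendsto_exp[OF tendsto_minus[OF tendsto_mult_left]])
  thus ?thesis by simp
qed

lemma rho_inf: "((\<lambda>y. rho (norm y)) \<longlongrightarrow> 0) at_infinity"
  by (rule filterlim_compose[OF rho_tendsto filterlim_norm_at_top])


lemma F_repr:
  assumes y0: "y \<noteq> 0" and u0: "poly p y / y ^ dp \<noteq> 0"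
  shows "\<exists>N. F y c = rot N * (exp (- (complex_of_real aa * Ln (poly p y / y ^ dp))) * (poly (hpoly p q) c + rr y c))"
proof -
  define u where "u = poly p y / y ^ dp"
  have u0': "u \<noteq> 0" using u0 u_def by simp
  have py: "poly p y = y ^ dp * u" using y0 by (simp add: u_def)
  have py0: "poly p y \<noteq> 0" using py y0 u0' by simp
  have "exp (Ln (poly p y)) = exp (of_nat dp * Ln y + Ln u)"
    using py0 y0 u0' by (simp add: exp_add exp_of_nat_mult py)
  then obtain N where N: "Ln (poly p y) = of_nat dp * Ln y + Ln u + complex_of_real (real_of_int (2 * N) * pi) * \<i>"
    unfolding exp_eq by blast
  have "F y c = exp (- complex_of_real aa * Ln (poly p y)) * (exp (complex_of_real (aa * real dp) * Ln y) * (poly (hpoly p q) c + rr y c))"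
    unfolding F_def expand[OF y0] using py0 by (simp add: powr_def)
  also have "\<dots> = (exp (- complex_of_real aa * Ln (poly p y)) * exp (complex_of_real (aa * real dp) * Ln y)) * (poly (hpoly p q) c + rr y c)"
    by (simp add: mult_ac)
  also have "exp (- complex_of_real aa * Ln (poly p y)) * exp (complex_of_real (aa * real dp) * Ln y) = rot (-N) * exp (- (complex_of_real aa * Ln u))"
  proof -
    have "- complex_of_real aa * Ln (poly p y) + complex_of_real (aa * real dp) * Ln y =
          complex_of_real (aa * (2 * pi * real_of_int (-N))) * \<i> + (- (complex_of_real aa * Ln u))"
      unfolding N by (simp add: algebra_simps)
    thus ?thesis unfolding rot_def exp_add[symmetric] by simp
  qed
  finally show ?thesis unfolding u_def by (intro exI[of _ "-N"]) (simp add: mult_ac)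
qed

lemma key:
  assumes eta: "\<eta> > 0"
  shows "\<exists>R>0. \<forall>y. norm y \<ge> R \<longrightarrow> poly p y \<noteq> 0 \<and> norm (poly p y) \<ge> norm y \<and>
           (\<forall>c. \<bar>green (hpoly p q) (F y c) - green (hpoly p q) (poly (hpoly p q) c)\<bar> \<le> \<eta>)"
proof -
  obtain \<theta> where th: "\<theta> > 0" "\<And>X v. norm (v - X) \<le> \<theta> * (1 + norm X) \<Longrightarrow> \<bar>green (hpoly p q) v - green (hpoly p q) X\<bar> \<le> \<eta>"
    using G.G_ucont[OF eta] by blast
  obtain C where C: "C > 0" "\<And>c. (1 + norm c) ^ dq \<le> C * (1 + norm (poly (hpoly p q) c))"
    using G.growth h_deg by auto
  define nu where "nu y = exp (- (complex_of_real aa * Ln (poly p y / y ^ dp)))" for y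
  have ev1: "\<forall>\<^sub>F y in at_infinity. dist (poly p y / y ^ dp) 1 < 1/2" by (rule tendstoD[OF u_tendsto]) simp
  have ev2: "\<forall>\<^sub>F y in at_infinity. dist (nu y) 1 < min (\<theta>/4) 1"
    unfolding nu_def by (rule tendstoD[OF nu_tendsto]) (use th(1) in simp)
  have ev3: "\<forall>\<^sub>F y in at_infinity. dist (rho (norm y)) 0 < \<theta>/(4*C)" by (rule tendstoD[OF rho_inf]) (use th(1) C(1) in simp)
  have ev4: "\<forall>\<^sub>F y in at_infinity. norm y \<ge> 2" unfolding eventually_at_infinity by blast
  have "\<forall>\<^sub>F y in at_infinity. dist (poly p y / y ^ dp) 1 < 1/2 \<and> dist (nu y) 1 < min (\<theta>/4) 1 \<and>
        dist (rho (norm y)) 0 < \<theta>/(4*C) \<and> norm y \<ge> 2"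
    using ev1 ev2 ev3 ev4 by (intro eventually_conj)
  then obtain b where b: "\<And>y. b \<le> norm y \<Longrightarrow> dist (poly p y / y ^ dp) 1 < 1/2 \<and> dist (nu y) 1 < min (\<theta>/4) 1 \<and>
        dist (rho (norm y)) 0 < \<theta>/(4*C) \<and> norm y \<ge> 2"
    unfolding eventually_at_infinity by blast
  show ?thesis
  proof (intro exI[of _ "max b 2"] conjI allI impI)
    show "max b 2 > (0::real)" by simp
    fix y :: complex assume yb: "norm y \<ge> max b 2"
    hence B: "dist (poly p y / y ^ dp) 1 < 1/2" "dist (nu y) 1 < min (\<theta>/4) 1"
        "dist (rho (norm y)) 0 < \<theta>/(4*C)" "norm y \<ge> 2" using b[of y] by auto
    define u where "u = poly p y / y ^ dp"
    have y0: "y \<noteq> 0" using B(4) by auto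
    have u1: "norm (u - 1) < 1/2" using B(1) unfolding u_def by (simp add: dist_norm)
    have uge: "norm u \<ge> 1/2" using u1 norm_triangle_ineq2[of 1 u] by (simp add: norm_minus_commute)
    have u0: "u \<noteq> 0" using uge by auto
    have py: "poly p y = y ^ dp * u" using y0 by (simp add: u_def)
    show "poly p y \<noteq> 0" using py y0 u0 by simp
    have "norm y ^ 2 \<le> norm y ^ dp" using B(4) p_deg by (intro power_increasing) auto
    moreover have "2 * norm y \<le> norm y ^ 2" using B(4) by (simp add: power2_eq_square mult_right_mono)
    moreover have "norm (poly p y) \<ge> norm y ^ dp / 2"
    proof -
      have "norm (poly p y) = norm y ^ dp * norm u" by (simp add: py norm_mult norm_power)
      moreover have "norm y ^ dp * norm u \<ge> norm y ^ dp * (1/2)" using uge by (intro mult_left_mono) auto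
      ultimately show ?thesis by simp
    qed
    ultimately show "norm (poly p y) \<ge> norm y" by linarith
    fix c
    obtain N where FN: "F y c = rot N * (nu y * (poly (hpoly p q) c + rr y c))"
      using F_repr[OF y0] u0 unfolding u_def nu_def by blast
    define X where "X = poly (hpoly p q) c"
    define r where "r = rr y c"
    have g1: "green (hpoly p q) (F y c) = green (hpoly p q) (nu y * (X + r))"
      unfolding FN X_def r_def by (rule green_rot)
    have nu1: "norm (nu y - 1) \<le> \<theta>/4" "norm (nu y - 1) \<le> 1" using B(2) by (auto simp: dist_norm)
    have nu2: "norm (nu y) \<le> 2" using nu1(2) norm_triangle_ineq2[of "nu y" 1] by simp
    have rb: "norm r \<le> \<theta>/4 * (1 + norm X)"
    proof -
      have "norm r \<le> rho (norm y) * (1 + norm c) ^ dq" unfolding r_def by (rule rr_bound[OF y0])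
      also have "\<dots> \<le> \<theta>/(4*C) * (1 + norm c) ^ dq" using B(3) by (intro mult_right_mono) (auto simp: dist_real_def)
      also have "\<dots> \<le> \<theta>/(4*C) * (C * (1 + norm X))" unfolding X_def using C(2) th(1) C(1) by (intro mult_left_mono) auto
      also have "\<dots> = \<theta>/4 * (1 + norm X)" using C(1) by simp
      finally show ?thesis .
    qed
    have "norm (nu y * (X + r) - X) = norm ((nu y - 1) * X + nu y * r)" by (simp add: algebra_simps)
    also have "\<dots> \<le> norm (nu y - 1) * norm X + norm (nu y) * norm r" by (rule order.trans[OF norm_triangle_ineq]) (simp add: norm_mult)
    also have "\<dots> \<le> \<theta>/4 * norm X + 2 * (\<theta>/4 * (1 + norm X))"
      using nu1 nu2 rb th(1) by (intro add_mono mult_mono) auto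
    also have "\<dots> \<le> \<theta> * (1 + norm X)" using th(1) by (simp add: field_simps)
    finally have "norm (nu y * (X + r) - X) \<le> \<theta> * (1 + norm X)" .
    from th(2)[OF this] show "\<bar>green (hpoly p q) (F y c) - green (hpoly p q) (poly (hpoly p q) c)\<bar> \<le> \<eta>"
      using g1 X_def by simp
  qed
qed


lemma dq_pos: "real dq \<ge> 2" using q_deg by simp

lemma main: "\<forall>\<epsilon>>0. \<exists>R>0. \<forall>z w. norm z > R \<longrightarrow>
           \<bar>Galpha p q z w - green (hpoly p q) (z powr (- of_real aa) * w)\<bar> < \<epsilon>"
proof (intro allI impI)
  fix \<epsilon> :: real assume eps: "\<epsilon> > 0"
  define \<eta> where "\<eta> = \<epsilon> / 2"
  have eta: "\<eta> > 0" using eps \<eta>_def by simp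
  obtain R where R: "R > 0" "\<And>y. norm y \<ge> R \<Longrightarrow> poly p y \<noteq> 0 \<and> norm (poly p y) \<ge> norm y \<and>
           (\<forall>c. \<bar>green (hpoly p q) (F y c) - green (hpoly p q) (poly (hpoly p q) c)\<bar> \<le> \<eta>)"
    using key[OF eta] by blast
  show "\<exists>R>0. \<forall>z w. norm z > R \<longrightarrow> \<bar>Galpha p q z w - green (hpoly p q) (z powr (- of_real aa) * w)\<bar> < \<epsilon>"
  proof (intro exI[of _ R] conjI allI impI R(1))
    fix z w :: complex assume zR: "norm z > R"
    define zn where "zn n = (poly p ^^ n) z" for n
    have zbig: "norm (zn n) \<ge> norm z" for n
    proof (induction n)
      case (Suc n)
      hence "norm (zn n) \<ge> R" using zR by simp
      hence "norm (poly p (zn n)) \<ge> norm (zn n)" using R(2) by blast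
      thus ?case using Suc by (simp add: zn_def)
    qed (simp add: zn_def)
    have znR: "norm (zn n) \<ge> R" for n using zbig[of n] zR by simp
    have zn0: "zn n \<noteq> 0" for n using znR[of n] R(1) by auto
    define cn where "cn n = zn n powr (- of_real aa) * Qit p q n z w" for n
    have Qeq: "Qit p q n z w = cn n * exp (complex_of_real aa * Ln (zn n))" for n
    proof -
      have "cn n * exp (complex_of_real aa * Ln (zn n)) =
            Qit p q n z w * (exp (- complex_of_real aa * Ln (zn n)) * exp (complex_of_real aa * Ln (zn n)))"
        unfolding cn_def using zn0[of n] by (simp add: powr_def mult_ac)
      also have "\<dots> = Qit p q n z w" by (simp add: exp_add[symmetric])
      finally show ?thesis by simp
    qed
    have cstep: "cn (Suc n) = F (zn n) (cn n)" for n
    proof -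
      have "cn (Suc n) = poly p (zn n) powr (- of_real aa) * eval2 q (zn n) (Qit p q n z w)"
        unfolding cn_def zn_def by simp
      thus ?thesis unfolding F_def Qeq[of n] .
    qed
    have ncn: "norm (Qit p q n z w) / norm (zn n) powr aa = norm (cn n)" for n
    proof -
      have "norm (zn n powr (- of_real aa)) = norm (zn n) powr (- aa)"
        using zn0[of n] by (simp add: powr_def norm_exp_eq_Re Re_Ln)
      thus ?thesis unfolding cn_def norm_mult by (simp add: powr_minus_divide)
    qed
    define A where "A n = logplus (norm (Qit p q n z w) / norm ((poly p ^^ n) z) powr aa) / real dq ^ n" for n
    have Aeq: "A n = logplus (norm (cn n)) / real dq ^ n" for n unfolding A_def ncn[symmetric] zn_def ..
    define gs where "gs n = green (hpoly p q) (cn n) / real dq ^ n" for n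
    have inc: "\<bar>gs (Suc n) - gs n\<bar> \<le> (\<eta> / dq) * (1 / dq) ^ n" for n
    proof -
      have gf: "green (hpoly p q) (poly (hpoly p q) (cn n)) = dq * green (hpoly p q) (cn n)"
        using G.G_func h_deg by simp
      have "gs (Suc n) - gs n = (green (hpoly p q) (F (zn n) (cn n)) - green (hpoly p q) (poly (hpoly p q) (cn n))) / real dq ^ Suc n"
        unfolding gs_def cstep gf using dq_pos by (simp add: field_simps)
      hence "\<bar>gs (Suc n) - gs n\<bar> = \<bar>green (hpoly p q) (F (zn n) (cn n)) - green (hpoly p q) (poly (hpoly p q) (cn n))\<bar> / real dq ^ Suc n"
        by (simp add: abs_divide)
      also have "\<dots> \<le> \<eta> / real dq ^ Suc n" using R(2)[OF znR[of n]] dq_pos by (intro divide_right_mono) auto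
      also have "\<dots> = (\<eta> / dq) * (1 / dq) ^ n" by (simp add: power_divide field_simps)
      finally show ?thesis .
    qed
    have r: "0 \<le> 1 / real dq" "1 / real dq < 1" using dq_pos by auto
    have gconv: "gs \<longlonglongrightarrow> lim gs" by (rule geom_conv(1)[OF inc r])
    have gb: "\<bar>lim gs - gs 0\<bar> \<le> \<eta>"
    proof -
      have "\<bar>lim gs - gs 0\<bar> \<le> (\<eta> / dq) * (1 / dq) ^ 0 / (1 - 1 / dq)" by (rule geom_conv(2)[OF inc r])
      also have "\<dots> \<le> \<eta> * (1 / dq) ^ 0" using G.geom_fact[of \<eta> 0] eta h_deg by simp
      finally show ?thesis by simp
    qed
    have diff: "(\<lambda>n. A n - gs n) \<longlonglongrightarrow> 0"
    proof (rule Lim_null_comparison)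
      show "\<forall>\<^sub>F n in sequentially. norm (A n - gs n) \<le> G.Bb * (1 / dq) ^ n"
      proof (intro always_eventually allI)
        fix n
        have "norm (A n - gs n) = \<bar>logplus (norm (cn n)) - green (hpoly p q) (cn n)\<bar> / real dq ^ n"
          unfolding Aeq gs_def using dq_pos by (simp add: abs_divide diff_divide_distrib[symmetric])
        also have "\<dots> \<le> G.Bb / real dq ^ n" using G.G_log[of "cn n"] dq_pos
          by (intro divide_right_mono) (auto simp: abs_minus_commute)
        also have "\<dots> = G.Bb * (1 / dq) ^ n" by (simp add: power_divide)
        finally show "norm (A n - gs n) \<le> G.Bb * (1 / dq) ^ n" .
      qed
      show "(\<lambda>n. G.Bb * (1 / real dq) ^ n) \<longlonglongrightarrow> 0"
        using r by (intro tendsto_mult_right_zero LIMSEQ_power_zero) auto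
    qed
    have "(\<lambda>n. (A n - gs n) + gs n) \<longlonglongrightarrow> 0 + lim gs" by (rule tendsto_add[OF diff gconv])
    hence "A \<longlonglongrightarrow> lim gs" by simp
    hence "Galpha p q z w = lim gs" unfolding Galpha_def A_def[abs_def] by (rule limI)
    moreover have "gs 0 = green (hpoly p q) (z powr (- of_real aa) * w)" unfolding gs_def cn_def zn_def by simp
    ultimately show "\<bar>Galpha p q z w - green (hpoly p q) (z powr (- of_real aa) * w)\<bar> < \<epsilon>"
      using gb eps \<eta>_def by simp
  qed
qed

end


theorem proposition4p14:
  fixes p :: "complex poly" and q :: "complex poly poly"
  assumes p_monic: "lead_coeff p = 1"
    and p_deg: "degree p \<ge> 2"
    and q_deg: "degree q \<ge> 2"
    and b_monic: "lead_coeff (lead_coeff q) = 1"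
    and delta_gt: "degree p > degree q"
    and alpha_eq: "alpha_exp p q = real (degree (lead_coeff q)) / (real (degree p) - real (degree q))"
    and not_prod: "\<not> poly_product q"
  shows "\<forall>\<epsilon>>0. \<exists>R>0. \<forall>z w. norm z > R \<longrightarrow>
           \<bar>Galpha p q z w - green (hpoly p q) (z powr (- of_real (alpha_exp p q)) * w)\<bar> < \<epsilon>"
proof -
  interpret M: mainloc p q
    by unfold_locales (use p_monic p_deg q_deg b_monic delta_gt alpha_eq in auto)
  show ?thesis by (rule M.main)
qed

end
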